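(* Let $\mu>0$ and $\gamma>0$, and set $p(x)=\frac{\gamma}{\mu^{3/2}}+\sqrt\mu\,x$. The function $$\widehat\phi(x)=e^{-\gamma x/\mu}\,U\Big(-\frac{\gamma^2}{4\mu^3},\frac12,p(x)^2\Big),\qquad x\ge0,$$ is a positive, decreasing solution on $[0,\infty)$ of $\frac12f''(x)-\mu xf'(x)-\gamma xf(x)=0$, and $\widehat\phi(x)\to0$ as $x\to\infty$.
   Context: Kummer's function is $M(a,b,x)=\sum_{n\ge0}\frac{(a)_n}{(b)_n}\frac{x^n}{n!}$ with $(a)_0=1$, $(a)_n=a(a+1)\cdots(a+n-1)$. The Tricomi confluent hypergeometric function is, for $b\notin\mathbb Z$, $U(a,b,x)=\frac{\Gamma(1-b)}{\Gamma(a-b+1)}M(a,b,x)+\frac{\Gamma(b-1)}{\Gamma(a)}x^{1-b}M(1+a-b,2-b,x)$ (with $1/\Gamma$ at poles of $\Gamma$ equal to $0$); it solves $xz''+(b-x)z'-az=0$ and $U(a,b,x)\sim x^{-a}$ as $x\to\infty$. *)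

theory Defs
  imports "HOL-Analysis.Analysis"
begin

definition kummerM :: "real \<Rightarrow> real \<Rightarrow> real \<Rightarrow> real" where
  "kummerM a b x = (\<Sum>n. pochhammer a n / pochhammer b n * x ^ n / fact n)"

text \<open>Tricomi's function U(a,b,x) for non-integer b and x > 0, via the connection
  formula; rGamma is 1/Gamma and vanishes at the poles of Gamma.\<close>
definition tricomiU :: "real \<Rightarrow> real \<Rightarrow> real \<Rightarrow> real" where
  "tricomiU a b x =
     Gamma (1 - b) * rGamma (a - b + 1) * kummerM a b x
     + Gamma (b - 1) * rGamma a * x powr (1 - b) * kummerM (1 + a - b) (2 - b) x"

end

theory Submission
  imports Defs
begin

fun cf :: "real \<Rightarrow> nat \<Rightarrow> real" where
  "cf a 0 = sqrt pi * rGamma (a + 1/2)"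
| "cf a (Suc 0) = -2 * sqrt pi * rGamma a"
| "cf a (Suc (Suc k)) = (2 * real k + 4 * a) / ((real k + 2) * (real k + 1)) * cf a k"

lemma nat2_induct: "P 0 \<Longrightarrow> P (Suc 0) \<Longrightarrow> (\<And>n. P n \<Longrightarrow> P (Suc (Suc n))) \<Longrightarrow> P n"
  by (induction n rule: less_induct) (metis less_Suc_eq not0_implies_Suc)

lemma rG: "rGamma (a::real) = a * rGamma (a + 1)"
  by (simp add: rGamma_plus1)

lemma cfD: "(real k + 1) * cf a (Suc k) = -2 * a * cf (a + 1/2) k"
proof (induction k rule: nat2_induct)
  case 1
  then show ?case using rG[of a] by (simp add: algebra_simps)
next
  case 2
  then show ?case by (simp add: field_simps)
next
  case (3 n)
  have p: "real n + 1 \<noteq> 0" "real n + 2 \<noteq> 0" "real n + 3 \<noteq> 0" by linarith+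
  have "(real (Suc (Suc n)) + 1) * cf a (Suc (Suc (Suc n)))
     = (2 * real (Suc n) + 4 * a) / ((real n + 2) * (real n + 1)) * ((real n + 1) * cf a (Suc n))"
    using p by (simp add: divide_simps, (simp add: algebra_simps)?)
  also have "\<dots> = (2 * real (Suc n) + 4 * a) / ((real n + 2) * (real n + 1)) * (-2 * a * cf (a + 1/2) n)"
    using 3 by simp
  also have "\<dots> = -2 * a * cf (a + 1/2) (Suc (Suc n))"
    using p by (simp add: divide_simps, (simp add: algebra_simps)?)
  finally show ?case .
qed

lemma cfQ: "(real k + 2 * a) * cf a k = 2 * a * (a + 1/2) * cf (a + 1) k"
proof (induction k rule: nat2_induct)
  case 1
  have "rGamma (a + 1/2) = (a + 1/2) * rGamma (a + 3/2)" using rG[of "a+1/2"] by (simp add: add.assoc)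
  then show ?case by (simp add: algebra_simps)
next
  case 2
  then show ?case using rG[of a] by (simp add: algebra_simps)
next
  case (3 n)
  have p: "real n + 1 \<noteq> 0" "real n + 2 \<noteq> 0" "real n + 3 \<noteq> 0" by linarith+
  have "(real (Suc (Suc n)) + 2 * a) * cf a (Suc (Suc n))
     = 2 * (real n + 2 * a + 2) / ((real n + 2) * (real n + 1)) * ((real n + 2 * a) * cf a n)"
    using p by (simp add: divide_simps, (simp add: algebra_simps)?)
  also have "\<dots> = 2 * (real n + 2 * a + 2) / ((real n + 2) * (real n + 1)) * (2 * a * (a + 1/2) * cf (a + 1) n)"
    using 3 by simp
  also have "\<dots> = 2 * a * (a + 1/2) * cf (a + 1) (Suc (Suc n))"
    using p by (simp add: divide_simps, (simp add: algebra_simps)?)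
  finally show ?case .
qed

lemma cfP0: "cf a 0 = (a + 1/2) * cf (a + 1) 0"
proof -
  have "rGamma (a + 1/2) = (a + 1/2) * rGamma (a + 3/2)" using rG[of "a+1/2"] by (simp add: add.assoc)
  then show ?thesis by (simp add: algebra_simps)
qed

lemma cfP: "cf a (Suc k) = cf (a + 1/2) k + (a + 1/2) * cf (a + 1) (Suc k)"
proof (cases k)
  case 0
  then show ?thesis using rG[of a] by (simp add: algebra_simps)
next
  case (Suc m)
  have d: "(real m + 1) * cf (a + 1/2) (Suc m) = -2 * (a + 1/2) * cf (a + 1) m"
    using cfD[of m "a + 1/2"] by (simp add: add.assoc)
  have q: "(real m + 2 * a) * cf a m = 2 * a * (a + 1/2) * cf (a + 1) m" by (rule cfQ)
  have p1: "real m + 1 \<noteq> 0" "real m + 2 \<noteq> 0" by linarith+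
  have "cf a (Suc (Suc m)) = (2 * real m + 4 * a) / ((real m + 2) * (real m + 1)) * cf a m" by simp
  also have "\<dots> = 4 * a * (a + 1/2) * cf (a + 1) m / ((real m + 2) * (real m + 1))"
    using q p1 by (simp add: divide_simps, (simp add: algebra_simps)?)
  also have "\<dots> = cf (a + 1/2) (Suc m) + (a + 1/2) * cf (a + 1) (Suc (Suc m))"
  proof -
    have e1: "cf (a + 1/2) (Suc m) = -2 * (a + 1/2) * cf (a + 1) m / (real m + 1)"
      using d p1 by (simp add: divide_simps, (simp add: algebra_simps)?)
    have e2: "cf (a + 1) (Suc (Suc m)) = (2 * real m + 4 * (a+1)) / ((real m + 2) * (real m + 1)) * cf (a+1) m"
      by simp
    show ?thesis unfolding e1 e2 using p1 by (simp add: divide_simps, (simp add: algebra_simps)?)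
  qed
  finally show ?thesis using Suc by simp
qed

lemma cf_even: "cf a (2*n) = sqrt pi * rGamma (a + 1/2) * (pochhammer a n / pochhammer (1/2) n / fact n)"
proof (induction n)
  case 0
  then show ?case by simp
next
  case (Suc n)
  have p: "pochhammer (1/2::real) n > 0" by (rule pochhammer_pos) simp
  have q: "real n + 1 \<noteq> 0" "2 * real n + 1 \<noteq> 0" "2 * real n + 2 \<noteq> 0" by linarith+
  have "cf a (2 * Suc n) = (2 * real (2*n) + 4 * a) / ((real (2*n) + 2) * (real (2*n) + 1)) * cf a (2*n)"
    by (simp add: numeral_eq_Suc)
  also have "\<dots> = (a + real n) / ((1/2 + real n) * (real n + 1)) * cf a (2*n)"
    using q by (simp add: divide_simps, (simp add: algebra_simps)?)
  also have "\<dots> = sqrt pi * rGamma (a + 1/2) * (pochhammer a (Suc n) / pochhammer (1/2) (Suc n) / fact (Suc n))"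
    unfolding Suc pochhammer_Suc fact_Suc using p q
    by (simp add: divide_simps, (simp add: algebra_simps)?)
  finally show ?case .
qed

lemma cf_odd: "cf a (2*n+1) = -2 * sqrt pi * rGamma a * (pochhammer (a + 1/2) n / pochhammer (3/2) n / fact n)"
proof (induction n)
  case 0
  then show ?case by simp
next
  case (Suc n)
  have p: "pochhammer (3/2::real) n > 0" by (rule pochhammer_pos) simp
  have q: "real n + 1 \<noteq> 0" "2 * real n + 3 \<noteq> 0" "2 * real n + 2 \<noteq> 0" by linarith+
  have "cf a (2 * Suc n + 1) = (2 * real (2*n+1) + 4 * a) / ((real (2*n+1) + 2) * (real (2*n+1) + 1)) * cf a (2*n+1)"
    by (simp add: numeral_eq_Suc)
  also have "\<dots> = (a + 1/2 + real n) / ((3/2 + real n) * (real n + 1)) * cf a (2*n+1)"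
    using q by (simp add: divide_simps, (simp add: algebra_simps)?)
  also have "\<dots> = -2 * sqrt pi * rGamma a * (pochhammer (a + 1/2) (Suc n) / pochhammer (3/2) (Suc n) / fact (Suc n))"
    unfolding Suc pochhammer_Suc fact_Suc using p q
    by (simp add: divide_simps, (simp add: algebra_simps)?)
  finally show ?case .
qed

definition kt :: "real \<Rightarrow> real \<Rightarrow> real \<Rightarrow> nat \<Rightarrow> real" where
  "kt a b z n = pochhammer a n / pochhammer b n * z ^ n / fact n"

lemma kt_Suc: "b > 0 \<Longrightarrow> kt a b z (Suc n) = kt a b z n * ((a + real n) * z / ((b + real n) * (real n + 1)))"
proof -
  assume b: "b > 0"
  have p: "pochhammer b n > 0" by (rule pochhammer_pos) (use b in simp)
  have q: "b + real n \<noteq> 0" "real n + 1 \<noteq> 0" using b by linarith+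
  show ?thesis unfolding kt_def pochhammer_Suc fact_Suc using p q
    by (simp add: divide_simps, (simp add: algebra_simps)?)
qed

lemma kt_summable_abs:
  assumes b: "b > 0"
  shows "summable (\<lambda>n. \<bar>kt a b z n\<bar>)"
proof (rule summable_ratio_test[of "1/2" "nat \<lceil>\<bar>a\<bar> + 4 * \<bar>z\<bar> + 1\<rceil>"])
  fix n assume n: "n \<ge> nat \<lceil>\<bar>a\<bar> + 4 * \<bar>z\<bar> + 1\<rceil>"
  hence n1: "real n \<ge> \<bar>a\<bar> + 4 * \<bar>z\<bar> + 1" by linarith
  have "\<bar>a + real n\<bar> * \<bar>z\<bar> \<le> (2 * real n) * (real n / 4)"
    by (rule mult_mono) (use n1 in auto)
  also have "\<dots> \<le> 1/2 * ((b + real n) * (real n + 1))"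
    using b by (simp add: algebra_simps)
  finally have r: "\<bar>(a + real n) * z / ((b + real n) * (real n + 1))\<bar> \<le> 1/2"
    using b by (simp add: abs_mult divide_simps, (simp add: algebra_simps)?)
  have "\<bar>kt a b z (Suc n)\<bar> = \<bar>kt a b z n\<bar> * \<bar>(a + real n) * z / ((b + real n) * (real n + 1))\<bar>"
    using kt_Suc[OF b] by (simp add: abs_mult)
  also have "\<dots> \<le> \<bar>kt a b z n\<bar> * (1/2)"
    by (rule mult_left_mono[OF r]) simp
  finally show "norm \<bar>kt a b z (Suc n)\<bar> \<le> 1/2 * norm \<bar>kt a b z n\<bar>" by simp
qed simp

lemma sums_interleave:
  fixes f :: "nat \<Rightarrow> real"
  assumes "(\<lambda>n. f (2*n)) sums s" "(\<lambda>n. f (2*n+1)) sums t"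
  shows "f sums (s + t)"
proof -
  define fe where "fe k = (if even k then f k else 0)" for k
  define fo where "fo k = (if odd k then f k else 0)" for k
  have sm1: "strict_mono (\<lambda>n::nat. 2*n)" by (rule strict_monoI) simp
  have sm2: "strict_mono (\<lambda>n::nat. 2*n+1)" by (rule strict_monoI) simp
  have "(\<lambda>n. fe (2*n)) sums s" using assms(1) by (simp add: fe_def)
  hence e: "fe sums s"
    by (subst (asm) sums_mono_reindex[OF sm1]) (auto simp: fe_def elim!: evenE)
  have "(\<lambda>n. fo (2*n+1)) sums t" using assms(2) by (simp add: fo_def)
  hence o: "fo sums t"
    by (subst (asm) sums_mono_reindex[OF sm2]) (auto simp: fo_def elim!: oddE)
  have "(\<lambda>k. fe k + fo k) sums (s + t)" by (rule sums_add[OF e o])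
  moreover have "(\<lambda>k. fe k + fo k) = f" by (auto simp: fe_def fo_def)
  ultimately show ?thesis by simp
qed

definition G :: "real \<Rightarrow> real \<Rightarrow> real" where
  "G a p = (\<Sum>k. cf a k * p ^ k)"

lemma cf_even': "cf a (2*n) * p ^ (2*n) = sqrt pi * rGamma (a + 1/2) * kt a (1/2) (p^2) n"
  unfolding cf_even kt_def power_mult by simp

lemma cf_odd': "cf a (2*n+1) * p ^ (2*n+1) = -2 * sqrt pi * rGamma a * p * kt (a + 1/2) (3/2) (p^2) n"
  unfolding cf_odd kt_def power_add power_mult by simp

lemma cf_abs_summable: "summable (\<lambda>k. \<bar>cf a k * p ^ k\<bar>)"
proof -
  let ?A = "sqrt pi * rGamma (a + 1/2)" and ?B = "-2 * sqrt pi * rGamma a * p"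
  have s1: "summable (\<lambda>n. \<bar>kt a (1/2) (p^2) n\<bar>)" by (rule kt_summable_abs) simp
  have s2: "summable (\<lambda>n. \<bar>kt (a + 1/2) (3/2) (p^2) n\<bar>)" by (rule kt_summable_abs) simp
  have "(\<lambda>n. \<bar>cf a (2*n) * p ^ (2*n)\<bar>) sums (\<bar>?A\<bar> * suminf (\<lambda>n. \<bar>kt a (1/2) (p^2) n\<bar>))"
    unfolding cf_even' abs_mult by (rule sums_mult) (rule summable_sums[OF s1])
  moreover have "(\<lambda>n. \<bar>cf a (2*n+1) * p ^ (2*n+1)\<bar>) sums (\<bar>?B\<bar> * suminf (\<lambda>n. \<bar>kt (a + 1/2) (3/2) (p^2) n\<bar>))"
    unfolding cf_odd' abs_mult[of ?B] by (rule sums_mult) (rule summable_sums[OF s2])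
  ultimately have "(\<lambda>k. \<bar>cf a k * p ^ k\<bar>) sums (\<bar>?A\<bar> * suminf (\<lambda>n. \<bar>kt a (1/2) (p^2) n\<bar>) + \<bar>?B\<bar> * suminf (\<lambda>n. \<bar>kt (a + 1/2) (3/2) (p^2) n\<bar>))"
    by (rule sums_interleave[where f = "\<lambda>k. \<bar>cf a k * p ^ k\<bar>"])
  thus ?thesis by (rule sums_summable)
qed

lemma cf_summable: "summable (\<lambda>k. cf a k * p ^ k)"
  by (rule summable_rabs_cancel[OF cf_abs_summable])

lemma G_kummer: "G a p = sqrt pi * rGamma (a + 1/2) * kummerM a (1/2) (p^2)
       + (-2 * sqrt pi * rGamma a * p) * kummerM (a + 1/2) (3/2) (p^2)"
proof -
  let ?A = "sqrt pi * rGamma (a + 1/2)" and ?B = "-2 * sqrt pi * rGamma a * p"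
  have s1: "summable (\<lambda>n. kt a (1/2) (p^2) n)"
    by (rule summable_rabs_cancel, rule kt_summable_abs) simp
  have s2: "summable (\<lambda>n. kt (a + 1/2) (3/2) (p^2) n)"
    by (rule summable_rabs_cancel, rule kt_summable_abs) simp
  have "(\<lambda>n. cf a (2*n) * p ^ (2*n)) sums (?A * suminf (\<lambda>n. kt a (1/2) (p^2) n))"
    unfolding cf_even' by (rule sums_mult) (rule summable_sums[OF s1])
  moreover have "(\<lambda>n. cf a (2*n+1) * p ^ (2*n+1)) sums (?B * suminf (\<lambda>n. kt (a + 1/2) (3/2) (p^2) n))"
    unfolding cf_odd' by (rule sums_mult) (rule summable_sums[OF s2])
  ultimately have "(\<lambda>k. cf a k * p ^ k) sums (?A * suminf (\<lambda>n. kt a (1/2) (p^2) n) + ?B * suminf (\<lambda>n. kt (a + 1/2) (3/2) (p^2) n))"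
    by (rule sums_interleave[where f = "\<lambda>k. cf a k * p ^ k"])
  hence "G a p = ?A * suminf (\<lambda>n. kt a (1/2) (p^2) n) + ?B * suminf (\<lambda>n. kt (a + 1/2) (3/2) (p^2) n)"
    unfolding G_def by (rule sums_unique[symmetric])
  thus ?thesis unfolding kummerM_def kt_def by simp
qed

lemma Gamma_mhalf: "Gamma (-1/2 :: real) = -2 * sqrt pi"
proof -
  have "rGamma (-1/2 :: real) = (-1/2) * rGamma (-1/2 + 1)" using rGamma_plus1[of "-1/2::real"] by simp
  also have "-1/2 + 1 = (1/2::real)" by simp
  finally have "rGamma (-1/2 :: real) = (-1/2) * rGamma (1/2)" .
  moreover have "rGamma (1/2::real) = inverse (sqrt pi)"
    by (simp add: rGamma_inverse_Gamma Gamma_one_half_real)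
  moreover have "Gamma (-1/2::real) = inverse (rGamma (-1/2))" by (simp add: rGamma_inverse_Gamma)
  ultimately have "Gamma (-1/2::real) = inverse ((-1/2) * inverse (sqrt pi))" by simp
  also have "\<dots> = -2 * sqrt pi" by (simp add: field_simps)
  finally show ?thesis .
qed

lemma tricomi_G: assumes "p > 0" shows "tricomiU a (1/2) (p^2) = G a p"
proof -
  have e: "(p^2) powr (1 - 1/2) = p" using assms by (simp add: powr_half_sqrt)
  have g: "Gamma (-(1/2)::real) = -2 * sqrt pi" using Gamma_mhalf by simp
  show ?thesis unfolding tricomiU_def G_kummer e
    by (simp add: Gamma_one_half_real g algebra_simps)
qed

lemma G_deriv: "(G a has_real_derivative (-2 * a * G (a + 1/2) p)) (at p)"
proof -
  have "DERIV (\<lambda>x. \<Sum>n. cf a n * x^n) p :> (\<Sum>n. diffs (cf a) n * p^n)"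
    by (rule termdiffs_strong[where K = "\<bar>p\<bar> + 1"]) (use cf_summable in auto)
  moreover have "diffs (cf a) = (\<lambda>n. -2 * a * cf (a + 1/2) n)"
    by (rule ext) (use cfD in \<open>simp add: diffs_def algebra_simps\<close>)
  moreover have "(\<Sum>n. -2 * a * cf (a + 1/2) n * p^n) = -2 * a * G (a + 1/2) p"
    unfolding G_def by (subst suminf_mult[symmetric]) (auto intro: cf_summable simp: mult.assoc)
  ultimately show ?thesis unfolding G_def[abs_def] by simp
qed

lemma G_rec: "G a p = p * G (a + 1/2) p + (a + 1/2) * G (a + 1) p"
proof -
  have s0: "(\<lambda>k. cf a k * p ^ k) sums G a p" unfolding G_def by (rule summable_sums[OF cf_summable])
  have s1: "(\<lambda>k. cf (a+1/2) k * p ^ k) sums G (a+1/2) p" unfolding G_def by (rule summable_sums[OF cf_summable])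
  have s2: "(\<lambda>k. cf (a+1) k * p ^ k) sums G (a+1) p" unfolding G_def by (rule summable_sums[OF cf_summable])
  have a0: "(\<lambda>n. cf a (Suc n) * p ^ Suc n) sums (G a p - cf a 0)"
    using s0 by (subst sums_Suc_iff) simp
  have a2: "(\<lambda>n. cf (a+1) (Suc n) * p ^ Suc n) sums (G (a+1) p - cf (a+1) 0)"
    using s2 by (subst sums_Suc_iff) simp
  have "(\<lambda>n. p * (cf (a+1/2) n * p ^ n) + (a + 1/2) * (cf (a+1) (Suc n) * p ^ Suc n))
         sums (p * G (a+1/2) p + (a + 1/2) * (G (a+1) p - cf (a+1) 0))"
    by (intro sums_add sums_mult s1 a2)
  moreover have "(\<lambda>n. p * (cf (a+1/2) n * p ^ n) + (a + 1/2) * (cf (a+1) (Suc n) * p ^ Suc n))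
      = (\<lambda>n. cf a (Suc n) * p ^ Suc n)"
    by (rule ext) (subst cfP, simp add: algebra_simps)
  ultimately have "G a p - cf a 0 = p * G (a+1/2) p + (a + 1/2) * (G (a+1) p - cf (a+1) 0)"
    using a0 sums_unique2 by metis
  thus ?thesis using cfP0[of a] by (simp add: algebra_simps)
qed

lemma cf_pos_formula:
  assumes a: "a > 0"
  shows "cf a k = sqrt pi * rGamma a * rGamma (a + 1/2) * ((-2) ^ k / fact k * Gamma (a + real k / 2))"
proof (induction k rule: nat2_induct)
  case 1
  have "Gamma a \<noteq> 0" using Gamma_real_pos[OF a] by simp
  hence "rGamma a * Gamma a = 1" by (simp add: rGamma_inverse_Gamma)
  then show ?case by simp
next
  case 2
  have a2: "a + 1/2 > 0" using a by simp
  have "Gamma (a + 1/2) \<noteq> 0" using Gamma_real_pos[OF a2] by simp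
  hence "rGamma (a + 1/2) * Gamma (a + 1/2) = 1" by (simp add: rGamma_inverse_Gamma)
  then show ?case by (simp add: algebra_simps)
next
  case (3 n)
  have nz: "a + real n / 2 \<notin> \<int>\<^sub>\<le>\<^sub>0"
    using a by (auto elim!: nonpos_Ints_cases) 
  have g: "Gamma (a + real (Suc (Suc n)) / 2) = (a + real n / 2) * Gamma (a + real n / 2)"
  proof -
    have e: "a + real (Suc (Suc n)) / 2 = (a + real n / 2) + 1" by (simp add: field_simps)
    show ?thesis unfolding e by (rule Gamma_plus1[OF nz])
  qed
  have q: "real n + 1 \<noteq> 0" "real n + 2 \<noteq> 0" by linarith+
  show ?case unfolding cf.simps 3 g fact_Suc power_Suc using q
    by (simp add: divide_simps, (simp add: algebra_simps)?)
qed

definition gam :: "real \<Rightarrow> real \<Rightarrow> real" where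
  "gam s t = indicator {0..} t * t powr (s - 1) / exp t"

lemma gam_nonneg: "gam s t \<ge> 0"
  unfolding gam_def by (auto simp: indicator_def)

lemma gam_measurable[measurable]: "gam s \<in> borel_measurable borel"
  unfolding gam_def by measurable

lemma gam_int:
  assumes "s > 0"
  shows "integrable lborel (gam s)" "integral\<^sup>L lborel (gam s) = Gamma s"
proof -
  have "(\<integral>\<^sup>+t. ennreal (gam s t) \<partial>lborel) = ennreal (Gamma s)"
    using Gamma_conv_nn_integral_real[OF assms] by (simp add: gam_def)
  hence "integrable lborel (gam s) \<and> integral\<^sup>L lborel (gam s) = Gamma s"
    by (subst (asm) nn_integral_eq_integrable) (auto simp: gam_nonneg less_imp_le[OF Gamma_real_pos[OF assms]])
  thus "integrable lborel (gam s)" "integral\<^sup>L lborel (gam s) = Gamma s" by auto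
qed

lemma gam_split:
  "gam (a + real k / 2) t = gam a t * sqrt t ^ k"
proof (cases "t > 0")
  case True
  have "t powr (a + real k / 2 - 1) = t powr (a - 1) * t powr (real k / 2)"
    by (subst powr_add[symmetric]) (simp add: algebra_simps)
  also have "t powr (real k / 2) = (t powr (1/2)) powr real k"
    by (simp add: powr_powr)
  also have "\<dots> = sqrt t ^ k"
    using True by (simp add: powr_half_sqrt powr_realpow)
  finally show ?thesis unfolding gam_def by simp
next
  case False
  then show ?thesis unfolding gam_def by (cases "t = 0") (auto simp: indicator_def)
qed

lemma G_pos:
  assumes a: "a > 0"
  shows "G a p > 0"
proof -
  define K where "K = sqrt pi * rGamma a * rGamma (a + 1/2)"
  have Kpos: "K > 0"
  proof -
    have a2: "a + 1/2 > 0" using a by simp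
    have "rGamma a > 0" using Gamma_real_pos[OF a] by (simp add: rGamma_inverse_Gamma)
    moreover have "rGamma (a + 1/2) > 0" using Gamma_real_pos[OF a2] by (simp add: rGamma_inverse_Gamma)
    ultimately show ?thesis unfolding K_def by simp
  qed
  define f where "f k t = (-2 * p) ^ k / fact k * gam (a + real k / 2) t" for k t
  have fk: "f k t = gam a t * ((-2 * p * sqrt t) ^ k / fact k)" for k t
  proof -
    have "(-2 * p * sqrt t) ^ k = (-2 * p) ^ k * sqrt t ^ k" by (rule power_mult_distrib)
    thus ?thesis unfolding f_def gam_split by simp
  qed
  have ak: "a + real k / 2 > 0" for k using a by (simp add: add_pos_nonneg)
  have int: "integrable lborel (f k)" for k
    unfolding f_def by (intro integrable_mult_right gam_int(1)[OF ak])
  have intf: "integral\<^sup>L lborel (f k) = (-2 * p) ^ k / fact k * Gamma (a + real k / 2)" for k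
    unfolding f_def using gam_int[OF ak] by simp
  have cfk: "cf a k * p ^ k = K * ((-2 * p) ^ k / fact k * Gamma (a + real k / 2))" for k
  proof -
    have "(-2 * p) ^ k = (-2) ^ k * p ^ k" by (rule power_mult_distrib)
    thus ?thesis unfolding cf_pos_formula[OF a] K_def by simp
  qed
  have normf: "(\<integral>t. norm (f k t) \<partial>lborel) = \<bar>cf a k * p ^ k\<bar> / K" for k
  proof -
    have "(\<lambda>t. norm (f k t)) = (\<lambda>t. \<bar>(-2 * p) ^ k / fact k\<bar> * gam (a + real k / 2) t)"
      by (rule ext) (simp add: f_def abs_mult gam_nonneg)
    hence "(\<integral>t. norm (f k t) \<partial>lborel) = \<bar>(-2 * p) ^ k / fact k\<bar> * Gamma (a + real k / 2)"
      using gam_int[OF ak] by simp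
    also have "\<dots> = \<bar>cf a k * p ^ k\<bar> / K"
      unfolding cfk using Kpos Gamma_real_pos[OF ak[of k]] by (simp add: abs_mult)
    finally show ?thesis .
  qed
  have sums_t: "(\<lambda>k. f k t) sums (gam a t * exp (-2 * p * sqrt t))" for t
  proof -
    have "(\<lambda>k. (-2 * p * sqrt t) ^ k /\<^sub>R fact k) sums exp (-2 * p * sqrt t)" by (rule exp_converges)
    hence "(\<lambda>k. (-2 * p * sqrt t) ^ k / fact k) sums exp (-2 * p * sqrt t)" by (simp add: divide_inverse_commute scaleR_conv_of_real)
    thus ?thesis unfolding fk by (rule sums_mult)
  qed
  have summ_t: "summable (\<lambda>k. norm (f k t))" for t
  proof -
    have "summable (\<lambda>k. \<bar>-2 * p * sqrt t\<bar> ^ k / fact k)"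
      using summable_exp[of "\<bar>-2 * p * sqrt t\<bar>"] by (simp add: divide_inverse_commute)
    hence "summable (\<lambda>k. gam a t * (\<bar>-2 * p * sqrt t\<bar> ^ k / fact k))" by (rule summable_mult)
    thus ?thesis unfolding fk by (simp add: abs_mult gam_nonneg power_abs)
  qed
  have summ_i: "summable (\<lambda>k. \<integral>t. norm (f k t) \<partial>lborel)"
    unfolding normf by (intro summable_divide cf_abs_summable)
  have I: "(\<integral>t. (\<Sum>k. f k t) \<partial>lborel) = (\<Sum>k. integral\<^sup>L lborel (f k))"
    by (rule integral_suminf[OF int]) (use summ_t summ_i in auto)
  have intS: "integrable lborel (\<lambda>t. \<Sum>k. f k t)"
    by (rule integrable_suminf[OF int]) (use summ_t summ_i in auto)
  have Seq: "(\<lambda>t. \<Sum>k. f k t) = (\<lambda>t. gam a t * exp (-2 * p * sqrt t))"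
    using sums_t by (auto intro!: ext sums_unique[symmetric])
  have ee: "(\<lambda>k. cf a k * p ^ k / K) = (\<lambda>k. (-2 * p) ^ k / fact k * Gamma (a + real k / 2))"
    using Kpos by (auto simp: cfk)
  have sm: "summable (\<lambda>k. (-2 * p) ^ k / fact k * Gamma (a + real k / 2))"
    using summable_divide[OF cf_summable[of a p], of K] unfolding ee .
  have "G a p = K * (\<Sum>k. integral\<^sup>L lborel (f k))"
    unfolding G_def intf cfk by (rule suminf_mult[OF sm])
  hence Geq: "G a p = K * (\<integral>t. gam a t * exp (-2 * p * sqrt t) \<partial>lborel)"
    using I Seq by simp
  have int2: "integrable lborel (\<lambda>t. gam a t * exp (-2 * p * sqrt t))" using intS Seq by simp
  have nn: "AE t in lborel. 0 \<le> gam a t * exp (-2 * p * sqrt t)" by (simp add: gam_nonneg)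
  have "(\<integral>t. gam a t * exp (-2 * p * sqrt t) \<partial>lborel) \<noteq> 0"
  proof
    assume "(\<integral>t. gam a t * exp (-2 * p * sqrt t) \<partial>lborel) = 0"
    hence "AE t in lborel. gam a t * exp (-2 * p * sqrt t) = 0"
      using integral_nonneg_eq_0_iff_AE[OF int2 nn] by simp
    hence "AE t in lborel. t \<notin> {0<..<1::real}"
      by eventually_elim (auto simp: gam_def)
    hence "emeasure lborel {0<..<1::real} = 0"
      by (subst (asm) AE_iff_measurable[where N = "{0<..<1::real}"]) auto
    thus False by simp
  qed
  moreover have "(\<integral>t. gam a t * exp (-2 * p * sqrt t) \<partial>lborel) \<ge> 0"
    by (rule integral_nonneg_AE[OF nn])
  ultimately show ?thesis using Geq Kpos by simp
qed

lemma G_shift: "G (a + real j / 2) p = p * G (a + real (Suc j) / 2) p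
    + (a + real (Suc j) / 2) * G (a + real (Suc (Suc j)) / 2) p"
proof -
  have e1: "a + real j / 2 + 1/2 = a + real (Suc j) / 2" by (simp add: field_simps)
  have e2: "a + real j / 2 + 1 = a + real (Suc (Suc j)) / 2" by (simp add: field_simps)
  show ?thesis using G_rec[of "a + real j / 2" p] unfolding e1 e2 .
qed

lemma step_ineq:
  fixes p x y hj b :: real
  assumes p: "p > 0" and x: "x > 0" and y: "y > 0" and xy: "x > p/2 * y"
    and b: "p^2 + 4*b \<ge> 0" and h: "hj = p*x + b*y"
  shows "hj > p/2 * x"
proof (cases "b \<ge> 0")
  case True
  hence "b * y \<ge> 0" using y by simp
  hence "hj \<ge> p * x" using h by simp
  moreover have "p * x > p/2 * x" using p x by simp
  ultimately show ?thesis by simp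
next
  case False
  have py: "p * y < 2 * x" using xy by simp
  have "b * (p * y) > b * (2 * x)" using False py by (simp add: mult_strict_left_mono_neg)
  hence "p * hj > p^2 * x + 2 * b * x" unfolding h by (simp add: algebra_simps power2_eq_square)
  moreover have "p^2 * x + 2 * b * x \<ge> p * (p/2 * x)"
  proof -
    have "(p^2/2 + 2*b) * x \<ge> 0" using b x by (intro mult_nonneg_nonneg) auto
    thus ?thesis by (simp add: algebra_simps power2_eq_square)
  qed
  ultimately have "p * hj > p * (p/2 * x)" by simp
  thus ?thesis using p by simp
qed

definition NN :: "real \<Rightarrow> nat" where "NN a = nat \<lceil>-2*a\<rceil> + 1"

lemma NN_pos: "a + real (NN a) / 2 > 0"
proof -
  have h: "real (nat \<lceil>-2*a\<rceil>) \<ge> -2*a" by (rule real_nat_ceiling_ge)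
  have "real (NN a) = real (nat \<lceil>-2*a\<rceil>) + 1" by (simp add: NN_def)
  thus ?thesis using h by linarith
qed

lemma NN_ge: "j \<ge> NN a \<Longrightarrow> a + real j / 2 > 0"
  using NN_pos[of a] by (smt (verit, ccfv_SIG) divide_right_mono of_nat_le_iff)

lemma pos_chain:
  assumes p: "p > 0" and pa: "p^2 \<ge> -4*a"
  shows "G (a + real (Suc j) / 2) p > 0 \<and> G (a + real j / 2) p > p/2 * G (a + real (Suc j) / 2) p"
proof -
  define h where "h j = G (a + real j / 2) p" for j
  define N where "N = NN a"
  have hpos: "j \<ge> N \<Longrightarrow> h j > 0" for j unfolding h_def N_def by (rule G_pos[OF NN_ge])
  have rec: "h j = p * h (Suc j) + (a + real (Suc j) / 2) * h (Suc (Suc j))" for j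
    unfolding h_def by (rule G_shift)
  have big: "h (Suc j) > 0 \<and> h j > p/2 * h (Suc j)" if "j \<ge> N" for j
  proof -
    have h1: "h (Suc j) > 0" "h (Suc (Suc j)) > 0" using hpos that by auto
    have "Suc j \<ge> NN a" using that unfolding N_def by simp
    hence b: "a + real (Suc j) / 2 > 0" by (rule NN_ge)
    have "(a + real (Suc j) / 2) * h (Suc (Suc j)) > 0" using b h1 by simp
    hence "h j > p * h (Suc j)" using rec[of j] by simp
    moreover have "p * h (Suc j) \<ge> p/2 * h (Suc j)" using p h1 by simp
    ultimately show ?thesis using h1 by simp
  qed
  have step: "h (Suc j) > 0 \<and> h j > p/2 * h (Suc j)" if IH: "h (Suc (Suc j)) > 0 \<and> h (Suc j) > p/2 * h (Suc (Suc j))" for j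
  proof -
    have x: "h (Suc j) > 0" using IH p by (smt (verit) mult_pos_pos half_gt_zero)
    have "real (Suc j) \<ge> 0" by simp
    moreover have "4 * (a + real (Suc j) / 2) = 4 * a + 2 * real (Suc j)" by simp
    ultimately have b: "p^2 + 4 * (a + real (Suc j) / 2) \<ge> 0" using pa by linarith
    show ?thesis using x step_ineq[OF p x _ _ b rec[of j]] IH by simp
  qed
  have "h (Suc j) > 0 \<and> h j > p/2 * h (Suc j)"
  proof (induction "N - j" arbitrary: j)
    case 0
    then show ?case using big by simp
  next
    case (Suc k)
    hence "k = N - Suc j" by simp
    hence "h (Suc (Suc j)) > 0 \<and> h (Suc j) > p/2 * h (Suc (Suc j))" using Suc.hyps(1) by blast
    then show ?case by (rule step)
  qed
  thus ?thesis unfolding h_def .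
qed

lemma G_decr:
  assumes b: "b > 0" and cp: "c \<le> p"
  shows "G b p \<le> G b c"
proof -
  have "\<exists>y. DERIV (G b) x :> y \<and> y \<le> 0" for x
  proof -
    have "G (b + 1/2) x > 0" using b by (intro G_pos) simp
    thus ?thesis using G_deriv[of b x] b by (intro exI[of _ "-2 * b * G (b + 1/2) x"]) simp
  qed
  thus ?thesis using DERIV_nonpos_imp_nonincreasing[OF cp, of "G b"] by blast
qed

lemma upper_chain:
  assumes c: "c > 0" and cp: "c \<le> p" and ca: "c^2 \<ge> -4*a"
  shows "G a p \<le> (p + 2 * (\<bar>a\<bar> + real (NN a)) / c) ^ NN a * G (a + real (NN a) / 2) c"
proof -
  define N where "N = NN a"
  define D where "D = 2 * (\<bar>a\<bar> + real N) / c"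
  define h where "h j = G (a + real j / 2) p" for j
  have p: "p > 0" using c cp by simp
  have pa: "p^2 \<ge> -4*a"
  proof -
    have "c^2 \<le> p^2" using c cp by (intro power_mono) auto
    thus ?thesis using ca by simp
  qed
  have D0: "D \<ge> 0" unfolding D_def using c by simp
  have rec: "h j = p * h (Suc j) + (a + real (Suc j) / 2) * h (Suc (Suc j))" for j
    unfolding h_def by (rule G_shift)
  have st: "h j \<le> (p + D) * h (Suc j)" if j: "j < N" for j
  proof -
    from pos_chain[OF p pa, of "Suc j"]
    have y: "h (Suc (Suc j)) > 0" and xy: "h (Suc j) > p/2 * h (Suc (Suc j))" unfolding h_def by auto
    have x: "h (Suc j) > 0" using y xy p by (smt (verit) mult_pos_pos half_gt_zero)
    define b where "b = a + real (Suc j) / 2"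
    have bb: "\<bar>b\<bar> \<le> \<bar>a\<bar> + real N"
    proof -
      have "real (Suc j) / 2 \<le> real N" using j by simp
      moreover have "real (Suc j) / 2 \<ge> 0" by simp
      ultimately show ?thesis unfolding b_def by linarith
    qed
    have y2: "h (Suc (Suc j)) \<le> 2 / p * h (Suc j)" using xy p by (simp add: field_simps)
    have "b * h (Suc (Suc j)) \<le> \<bar>b\<bar> * h (Suc (Suc j))" using y by (intro mult_right_mono) auto
    also have "\<dots> \<le> \<bar>b\<bar> * (2 / p * h (Suc j))" by (intro mult_left_mono y2) auto
    also have "\<dots> = (\<bar>b\<bar> * (2 / p)) * h (Suc j)" by simp
    also have "\<dots> \<le> D * h (Suc j)"
    proof (intro mult_right_mono)
      have "2 / p \<le> 2 / c" using c cp by (intro divide_left_mono) auto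
      hence "\<bar>b\<bar> * (2 / p) \<le> (\<bar>a\<bar> + real N) * (2 / c)"
        using bb by (intro mult_mono) (use p in auto)
      also have "(\<bar>a\<bar> + real N) * (2 / c) = D" unfolding D_def by simp
      finally show "\<bar>b\<bar> * (2 / p) \<le> D" .
    qed (use x in auto)
    finally have "b * h (Suc (Suc j)) \<le> D * h (Suc j)" .
    thus ?thesis using rec[of j] unfolding b_def[symmetric] by (simp add: algebra_simps)
  qed
  have ind: "j \<le> N \<Longrightarrow> h 0 \<le> (p + D) ^ j * h j" for j
  proof (induction j)
    case 0 then show ?case by simp
  next
    case (Suc j)
    hence "h 0 \<le> (p + D) ^ j * h j" by simp
    also have "\<dots> \<le> (p + D) ^ j * ((p + D) * h (Suc j))"
      using st[of j] Suc.prems p D0 by (intro mult_left_mono) auto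
    finally show ?case by (simp add: algebra_simps)
  qed
  have "h 0 \<le> (p + D) ^ N * h N" using ind by simp
  also have "\<dots> \<le> (p + D) ^ N * G (a + real N / 2) c"
    unfolding h_def using p D0 by (intro mult_left_mono G_decr cp) (auto simp: N_def NN_pos)
  finally show ?thesis unfolding h_def N_def D_def by simp
qed

lemma poly_exp_lim:
  fixes k s u :: real
  assumes k: "k > 0" and s: "s > 0" and u: "u \<ge> 0"
  shows "((\<lambda>x. exp (-k*x) * (u + s*x)^N) \<longlongrightarrow> 0) at_top"
proof (rule tendsto_sandwich[of "\<lambda>_. 0" _ _ "\<lambda>x. (2 * s/k)^N * ((k*x)^N / exp (k*x))"])
  show "eventually (\<lambda>x. 0 \<le> exp (-k*x) * (u + s*x)^N) at_top"
    using eventually_ge_at_top[of 0] by eventually_elim (use s u in simp)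
  show "eventually (\<lambda>x. exp (-k*x) * (u + s*x)^N \<le> (2 * s/k)^N * ((k*x)^N / exp (k*x))) at_top"
    using eventually_ge_at_top[of "u/s"] eventually_ge_at_top[of 0]
  proof eventually_elim
    case (elim x)
    have "u \<le> s * x" using elim s by (simp add: field_simps)
    hence "u + s*x \<le> (2 * s/k) * (k*x)" using k by simp
    hence "(u + s*x)^N \<le> ((2 * s/k) * (k*x))^N" by (intro power_mono) (use u s elim in auto)
    hence "exp (-k*x) * (u + s*x)^N \<le> exp (-k*x) * ((2 * s/k) * (k*x))^N"
      by (intro mult_left_mono) auto
    also have "\<dots> = (2 * s/k)^N * ((k*x)^N / exp (k*x))"
      by (simp add: power_mult_distrib exp_minus field_simps)
    finally show ?case .
  qed
  show "((\<lambda>_. 0::real) \<longlongrightarrow> 0) at_top" by simp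
  have "filterlim (\<lambda>x. k * x) at_top at_top"
    by (rule filterlim_tendsto_pos_mult_at_top[OF tendsto_const k filterlim_ident])
  hence "((\<lambda>x. (k*x)^N / exp (k*x)) \<longlongrightarrow> 0) at_top"
    by (rule filterlim_compose[OF tendsto_power_div_exp_0])
  thus "((\<lambda>x. (2 * s/k)^N * ((k*x)^N / exp (k*x))) \<longlongrightarrow> 0) at_top"
    by (rule tendsto_mult_right_zero)
qed

lemma dG_lin: "((\<lambda>x. G b (c0 + s * x)) has_real_derivative (s * (-2 * b * G (b + 1/2) (c0 + s * x)))) (at x)"
proof -
  have l: "((\<lambda>x. c0 + s * x) has_real_derivative s) (at x)"
    by (auto intro!: derivative_eq_intros)
  show ?thesis using DERIV_chain2[OF G_deriv[of b "c0 + s * x"] l] by (simp add: mult.commute)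
qed

lemma dE: "((\<lambda>x. exp (-k * x)) has_real_derivative (exp (-k * x) * (-k))) (at x)"
  by (auto intro!: derivative_eq_intros)

lemma alg:
  fixes E s c0 x q g0 g1 g2 a :: real
  assumes ha: "-4 * a = c0^2" and hq: "q = c0 + s * x" and r: "g0 = q * g1 + (a + 1/2) * g2"
  shows "1/2 * (E * (4 * a * (a + 1/2) * s^2 * g2 + 4 * a * (s * c0) * s * g1 + (s * c0)^2 * g0))
     - s^2 * x * (E * (s * (-2 * a * g1) - (s * c0) * g0)) - (s^3 * c0) * x * (E * g0) = 0"
proof -
  have c: "a = -(c0^2) / 4" using ha by simp
  show ?thesis unfolding r hq c by (simp add: field_simps power2_eq_square power3_eq_cube)
qed

lemma alg2:
  fixes E s k g0 g1 g2 a :: real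
  shows "(E * (-k)) * (s * (-2 * a * g1) - k * g0) + (s * (-2 * a * (s * (-2 * (a + 1/2) * g2))) - k * (s * (-2 * a * g1))) * E
    = E * (4 * a * (a + 1/2) * s^2 * g2 + 4 * a * k * s * g1 + k^2 * g0)"
  by (simp add: algebra_simps power2_eq_square)

theorem lemma3p5:
  fixes \<mu> \<gamma> :: real and p \<phi> :: "real \<Rightarrow> real"
  assumes "\<mu> > 0" and "\<gamma> > 0"
  defines "p \<equiv> (\<lambda>x. \<gamma> / \<mu> powr (3/2) + sqrt \<mu> * x)"
  defines "\<phi> \<equiv> (\<lambda>x. exp (- \<gamma> * x / \<mu>) * tricomiU (- \<gamma>\<^sup>2 / (4 * \<mu> ^ 3)) (1/2) ((p x)\<^sup>2))"
  shows "(\<forall>x\<ge>0. \<phi> x > 0)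
    \<and> (\<forall>x y. 0 \<le> x \<longrightarrow> x < y \<longrightarrow> \<phi> y < \<phi> x)
    \<and> (\<forall>x\<ge>0. \<phi> differentiable (at x) \<and> deriv \<phi> differentiable (at x)
          \<and> 1/2 * deriv (deriv \<phi>) x - \<mu> * x * deriv \<phi> x - \<gamma> * x * \<phi> x = 0)
    \<and> (\<phi> \<longlongrightarrow> 0) at_top"
proof -
  have mu: "\<mu> > 0" and ga: "\<gamma> > 0" by fact+
  define s where "s = sqrt \<mu>"
  have s: "s > 0" unfolding s_def using mu by simp
  have mus: "\<mu> = s^2" unfolding s_def using mu by simp
  have mp: "\<mu> powr (3/2) = s^3"
  proof -
    have "\<mu> powr (3/2) = \<mu> powr (1 + 1/2)" by simp
    also have "\<dots> = \<mu> powr 1 * \<mu> powr (1/2)" by (rule powr_add)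
    also have "\<dots> = \<mu> * sqrt \<mu>" using mu by (simp add: powr_half_sqrt)
    also have "\<dots> = s^3" unfolding s_def using mu by (simp add: power3_eq_cube)
    finally show ?thesis .
  qed
  define c0 where "c0 = \<gamma> / s^3"
  have c0: "c0 > 0" unfolding c0_def using ga s by simp
  define a where "a = - \<gamma>\<^sup>2 / (4 * \<mu> ^ 3)"
  define k where "k = \<gamma> / \<mu>"
  have k: "k > 0" unfolding k_def using ga mu by simp
  have pdef: "p x = c0 + s * x" for x unfolding p_def c0_def mp s_def by simp
  have gc: "\<gamma> = s^3 * c0" unfolding c0_def using s by simp
  have ac: "-4 * a = c0^2" unfolding a_def c0_def mus using s by (simp add: field_simps power_mult_distrib)
  have kc: "k = s * c0" unfolding k_def gc mus using s by (simp add: field_simps power2_eq_square power3_eq_cube)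
  define P where "P x = c0 + s * x" for x
  define U where "U = {-c0/s<..}"
  have U: "x \<in> U \<longleftrightarrow> P x > 0" for x unfolding U_def P_def using s by (auto simp: field_simps)
  have openU: "open U" unfolding U_def by simp
  define \<phi>1 where "\<phi>1 x = exp (-k * x) * G a (P x)" for x
  have phi_eq: "\<phi> x = \<phi>1 x" if "x \<in> U" for x
  proof -
    have "P x > 0" using U that by simp
    hence "tricomiU a (1/2) ((p x)\<^sup>2) = G a (P x)" unfolding pdef P_def[symmetric] by (rule tricomi_G)
    moreover have "- \<gamma> * x / \<mu> = -k * x" unfolding k_def by simp
    ultimately show ?thesis unfolding \<phi>_def \<phi>1_def a_def by simp
  qed
  define \<psi> where "\<psi> x = exp (-k * x) * (s * (-2 * a * G (a + 1/2) (P x)) - k * G a (P x))" for x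
  define \<psi>' where "\<psi>' x = exp (-k * x) * (4 * a * (a + 1/2) * s^2 * G (a + 1) (P x)
      + 4 * a * k * s * G (a + 1/2) (P x) + k^2 * G a (P x))" for x
  have d1: "(\<phi>1 has_real_derivative \<psi> x) (at x)" for x
  proof -
    have "((\<lambda>x. exp (-k * x) * G a (c0 + s * x)) has_real_derivative
           (exp (-k * x) * (-k)) * G a (c0 + s * x) + (s * (-2 * a * G (a + 1/2) (c0 + s * x))) * exp (-k * x)) (at x)"
      by (rule DERIV_mult[OF dE dG_lin])
    thus ?thesis unfolding \<phi>1_def[abs_def] \<psi>_def P_def by (rule DERIV_cong) (simp add: algebra_simps)
  qed
  have d2: "(\<psi> has_real_derivative \<psi>' x) (at x)" for x
  proof -
    have e: "a + 1/2 + 1/2 = a + 1" by simp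
    have i: "((\<lambda>x. s * (-2 * a * G (a + 1/2) (c0 + s * x)) - k * G a (c0 + s * x)) has_real_derivative
        s * (-2 * a * (s * (-2 * (a + 1/2) * G (a + 1) (c0 + s * x)))) - k * (s * (-2 * a * G (a + 1/2) (c0 + s * x)))) (at x)"
      by (intro DERIV_diff DERIV_cmult dG_lin[of "a + 1/2", unfolded e] dG_lin)
    have "((\<lambda>x. exp (-k * x) * (s * (-2 * a * G (a + 1/2) (c0 + s * x)) - k * G a (c0 + s * x))) has_real_derivative
       (exp (-k * x) * (-k)) * (s * (-2 * a * G (a + 1/2) (c0 + s * x)) - k * G a (c0 + s * x))
       + (s * (-2 * a * (s * (-2 * (a + 1/2) * G (a + 1) (c0 + s * x)))) - k * (s * (-2 * a * G (a + 1/2) (c0 + s * x))))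
         * exp (-k * x)) (at x)"
      by (rule DERIV_mult[OF dE i])
    thus ?thesis unfolding \<psi>_def[abs_def] \<psi>'_def P_def alg2 .
  qed
  have dphi: "(\<phi> has_real_derivative \<psi> x) (at x)" if "x \<in> U" for x
    by (rule has_field_derivative_transform_within_open[OF d1 openU that]) (simp add: phi_eq)
  have deriv_eq: "deriv \<phi> x = \<psi> x" if "x \<in> U" for x
    by (rule DERIV_imp_deriv[OF dphi[OF that]])
  have ddphi: "(deriv \<phi> has_real_derivative \<psi>' x) (at x)" if "x \<in> U" for x
    by (rule has_field_derivative_transform_within_open[OF d2 openU that]) (simp add: deriv_eq)
  have U0: "x \<in> U" if "x \<ge> 0" for x using U[of x] that c0 s unfolding P_def
    by (simp add: add_pos_nonneg)
  have Pge: "P x \<ge> c0" if "x \<ge> 0" for x unfolding P_def using s that by simp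
  have chain: "G (a + 1/2) (P x) > 0 \<and> G a (P x) > P x / 2 * G (a + 1/2) (P x)" if "x \<ge> 0" for x
  proof -
    have Pp: "P x > 0" using Pge[OF that] c0 by simp
    have "c0^2 \<le> (P x)^2" using Pge[OF that] c0 by (intro power_mono) auto
    hence "(P x)^2 \<ge> -4 * a" using ac by simp
    from pos_chain[OF Pp this, of 0] show ?thesis by simp
  qed
  have pos: "\<phi> x > 0" if "x \<ge> 0" for x
  proof -
    have "G a (P x) > 0"
      using chain[OF that] Pge[OF that] c0 by (smt (verit) mult_pos_pos half_gt_zero)
    thus ?thesis using phi_eq[OF U0[OF that]] unfolding \<phi>1_def by simp
  qed
  have psineg: "\<psi> x < 0" if "x \<ge> 0" for x
  proof -
    have g1: "G (a + 1/2) (P x) > 0" and g0: "G a (P x) > P x / 2 * G (a + 1/2) (P x)" using chain[OF that] by auto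
    have "P x / 2 * G (a + 1/2) (P x) \<ge> c0 / 2 * G (a + 1/2) (P x)"
      using Pge[OF that] g1 by (intro mult_right_mono) auto
    hence g: "c0 / 2 * G (a + 1/2) (P x) < G a (P x)" using g0 by simp
    have "s * (-2 * a * G (a + 1/2) (P x)) - k * G a (P x) = s * c0 * (c0 / 2 * G (a + 1/2) (P x) - G a (P x))"
    proof -
      have c: "a = -(c0^2) / 4" using ac by simp
      show ?thesis unfolding kc c by (simp add: algebra_simps power2_eq_square)
    qed
    also have "\<dots> < 0" using g s c0 by (simp add: mult_pos_neg)
    finally show ?thesis unfolding \<psi>_def by (simp add: mult_pos_neg)
  qed
  have part1: "\<forall>x\<ge>0. \<phi> x > 0" using pos by blast
  have part2: "\<forall>x y. 0 \<le> x \<longrightarrow> x < y \<longrightarrow> \<phi> y < \<phi> x"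
  proof (intro allI impI)
    fix x y :: real assume x: "0 \<le> x" and xy: "x < y"
    show "\<phi> y < \<phi> x"
    proof (rule DERIV_neg_imp_decreasing[OF xy])
      fix t assume "x \<le> t" "t \<le> y"
      hence t: "t \<ge> 0" using x by simp
      show "\<exists>y. DERIV \<phi> t :> y \<and> y < 0" using dphi[OF U0[OF t]] psineg[OF t] by blast
    qed
  qed
  have part3: "\<forall>x\<ge>0. \<phi> differentiable (at x) \<and> deriv \<phi> differentiable (at x)
          \<and> 1/2 * deriv (deriv \<phi>) x - \<mu> * x * deriv \<phi> x - \<gamma> * x * \<phi> x = 0"
  proof (intro allI impI conjI)
    fix x :: real assume x: "x \<ge> 0"
    note xU = U0[OF x]
    show "\<phi> differentiable (at x)"
      by (rule differentiableI[OF has_field_derivative_imp_has_derivative[OF dphi[OF xU]]])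
    show "deriv \<phi> differentiable (at x)"
      by (rule differentiableI[OF has_field_derivative_imp_has_derivative[OF ddphi[OF xU]]])
    have dd: "deriv (deriv \<phi>) x = \<psi>' x" by (rule DERIV_imp_deriv[OF ddphi[OF xU]])
    have r: "G a (P x) = P x * G (a + 1/2) (P x) + (a + 1/2) * G (a + 1) (P x)" by (rule G_rec)
    show "1/2 * deriv (deriv \<phi>) x - \<mu> * x * deriv \<phi> x - \<gamma> * x * \<phi> x = 0"
      unfolding dd deriv_eq[OF xU] phi_eq[OF xU] \<psi>'_def \<psi>_def \<phi>1_def
      unfolding kc gc mus
      by (rule alg[OF ac _ r]) (simp add: P_def)
  qed
  have part4: "(\<phi> \<longlongrightarrow> 0) at_top"
  proof -
    define N where "N = NN a"
    define D where "D = 2 * (\<bar>a\<bar> + real N) / c0"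
    define M where "M = G (a + real N / 2) c0"
    have D: "D \<ge> 0" unfolding D_def using c0 by simp
    have M: "M > 0" unfolding M_def N_def by (rule G_pos[OF NN_pos])
    have ub: "\<phi> x \<le> M * (exp (-k * x) * ((c0 + D) + s * x) ^ N)" if x: "x \<ge> 0" for x
    proof -
      have "G a (P x) \<le> (P x + D) ^ N * M"
        unfolding D_def M_def N_def
        by (rule upper_chain[OF c0 Pge[OF x]]) (use ac in simp)
      hence "exp (-k * x) * G a (P x) \<le> exp (-k * x) * ((P x + D) ^ N * M)" by simp
      thus ?thesis using phi_eq[OF U0[OF x]] unfolding \<phi>1_def P_def by (simp add: algebra_simps)
    qed
    show ?thesis
    proof (rule tendsto_sandwich[of "\<lambda>_. 0" _ _ "\<lambda>x. M * (exp (-k * x) * ((c0 + D) + s * x) ^ N)"])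
      show "eventually (\<lambda>x. 0 \<le> \<phi> x) at_top"
        using eventually_ge_at_top[of 0] by eventually_elim (use pos in \<open>auto intro: less_imp_le\<close>)
      show "eventually (\<lambda>x. \<phi> x \<le> M * (exp (-k * x) * ((c0 + D) + s * x) ^ N)) at_top"
        using eventually_ge_at_top[of 0] by eventually_elim (rule ub)
      show "((\<lambda>_. 0::real) \<longlongrightarrow> 0) at_top" by simp
      show "((\<lambda>x. M * (exp (-k * x) * ((c0 + D) + s * x) ^ N)) \<longlongrightarrow> 0) at_top"
        by (rule tendsto_mult_right_zero[OF poly_exp_lim[OF k s]]) (use c0 D in simp)
    qed
  qed
  show ?thesis using part1 part2 part3 part4 by blast
qed

end
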